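(* Let $(P,\omega)$ be a labeled poset with $|P|=p$ and let $s\in P$. A function $f:P\to\mathbb{N}$ is a $(P,\omega;s)$-partition if and only if $f'$ is $w$-compatible for some $w\in\mathcal{L}(P,\omega;s)$. In other words, $$\mathcal{A}(P,\omega;s)=\dot\bigcup_{w\in\mathcal{L}(P,\omega;s)} S_w,$$ a disjoint union.
   Context: $\mathbb{N}=\{0,1,2,\dots\}$. A labeling is a bijection $\omega:P\to[p]$. A linear extension is an order-preserving bijection $g:P\to[p]$; $\mathcal{L}(P,\omega)$ is the set of words (permutations) $w=\omega\circ g^{-1}=w_1\cdots w_p$ over all linear extensions $g$, and $\mathcal{L}(P,\omega;s)$ is the set of those $w\in\mathcal{L}(P,\omega)$ with $w_p=\omega(s)$. A $(P,\omega)$-partition is a map $f:P\to\mathbb{N}$ such that $f(x)\ge f(y)$ whenever $x\le y$, and $f(x)>f(y)$ whenever $x\le y$ and $\omega(x)>\omega(y)$. A $(P,\omega;s)$-partition is a $(P,\omega)$-partition $f$ such that $f(s)\le f(t)$ for all $t\in P$, and such that $f(s)=f(t)$ for $t\neq s$ implies $\omega(s)>\omega(t)$; $\mathcal{A}(P,\omega;s)$ is the set of these. For $f:P\to\mathbb{N}$ set $f'=f\circ\omega^{-1}:[p]\to\mathbb{N}$. For a permutation $w=w_1\cdots w_p$, a function $f':[p]\to\mathbb{N}$ is $w$-compatible if $f'(w_1)\ge\cdots\ge f'(w_p)$ and $f'(w_i)>f'(w_{i+1})$ whenever $w_i>w_{i+1}$. $S_w$ is the set of all $f:P\to\mathbb{N}$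 such that $f'$ is $w$-compatible. *)

theory Defs
  imports Main
begin

definition poset_on :: "'a set \<Rightarrow> ('a \<Rightarrow> 'a \<Rightarrow> bool) \<Rightarrow> bool" where
  "poset_on P le \<longleftrightarrow> (\<forall>x\<in>P. le x x) \<and>
     (\<forall>x\<in>P. \<forall>y\<in>P. le x y \<and> le y x \<longrightarrow> x = y) \<and>
     (\<forall>x\<in>P. \<forall>y\<in>P. \<forall>z\<in>P. le x y \<and> le y z \<longrightarrow> le x z)"

definition labeling :: "'a set \<Rightarrow> ('a \<Rightarrow> nat) \<Rightarrow> bool" where
  "labeling P \<omega> \<longleftrightarrow> bij_betw \<omega> P {1..card P}"

definition linear_extension :: "'a set \<Rightarrow> ('a \<Rightarrow> 'a \<Rightarrow> bool) \<Rightarrow> ('a \<Rightarrow> nat) \<Rightarrow> bool" where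
  "linear_extension P le g \<longleftrightarrow> bij_betw g P {1..card P} \<and>
     (\<forall>x\<in>P. \<forall>y\<in>P. le x y \<longrightarrow> g x \<le> g y)"

text \<open>The word w = omega o g^{-1} = w_1 ... w_p, as a list (w_i is the (i-1)-th list entry).\<close>
definition word_of :: "'a set \<Rightarrow> ('a \<Rightarrow> nat) \<Rightarrow> ('a \<Rightarrow> nat) \<Rightarrow> nat list" where
  "word_of P \<omega> g = map (\<lambda>i. \<omega> (the_inv_into P g i)) [1..<card P + 1]"

definition lin_words :: "'a set \<Rightarrow> ('a \<Rightarrow> 'a \<Rightarrow> bool) \<Rightarrow> ('a \<Rightarrow> nat) \<Rightarrow> nat list set" where
  "lin_words P le \<omega> = {word_of P \<omega> g | g. linear_extension P le g}"

definition lin_words_s :: "'a set \<Rightarrow> ('a \<Rightarrow> 'a \<Rightarrow> bool) \<Rightarrow> ('a \<Rightarrow> nat) \<Rightarrow> 'a \<Rightarrow> nat list set" where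
  "lin_words_s P le \<omega> s = {w \<in> lin_words P le \<omega>. w \<noteq> [] \<and> last w = \<omega> s}"

definition P_partition :: "'a set \<Rightarrow> ('a \<Rightarrow> 'a \<Rightarrow> bool) \<Rightarrow> ('a \<Rightarrow> nat) \<Rightarrow> ('a \<Rightarrow> nat) \<Rightarrow> bool" where
  "P_partition P le \<omega> f \<longleftrightarrow>
     (\<forall>x\<in>P. \<forall>y\<in>P. le x y \<longrightarrow> f x \<ge> f y \<and> (\<omega> x > \<omega> y \<longrightarrow> f x > f y))"

definition Ps_partition :: "'a set \<Rightarrow> ('a \<Rightarrow> 'a \<Rightarrow> bool) \<Rightarrow> ('a \<Rightarrow> nat) \<Rightarrow> 'a \<Rightarrow> ('a \<Rightarrow> nat) \<Rightarrow> bool" where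
  "Ps_partition P le \<omega> s f \<longleftrightarrow> P_partition P le \<omega> f \<and>
     (\<forall>t\<in>P. f s \<le> f t) \<and>
     (\<forall>t\<in>P. t \<noteq> s \<and> f s = f t \<longrightarrow> \<omega> s > \<omega> t)"

text \<open>A(P,omega;s). Functions are total on 'a; only values on P matter.\<close>
definition A_set :: "'a set \<Rightarrow> ('a \<Rightarrow> 'a \<Rightarrow> bool) \<Rightarrow> ('a \<Rightarrow> nat) \<Rightarrow> 'a \<Rightarrow> ('a \<Rightarrow> nat) set" where
  "A_set P le \<omega> s = {f. Ps_partition P le \<omega> s f}"

definition w_compatible :: "nat list \<Rightarrow> (nat \<Rightarrow> nat) \<Rightarrow> bool" where
  "w_compatible w f' \<longleftrightarrow> (\<forall>i. i + 1 < length w \<longrightarrow>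
      f' (w ! i) \<ge> f' (w ! (i + 1)) \<and>
      (w ! i > w ! (i + 1) \<longrightarrow> f' (w ! i) > f' (w ! (i + 1))))"

definition S_w :: "'a set \<Rightarrow> ('a \<Rightarrow> nat) \<Rightarrow> nat list \<Rightarrow> ('a \<Rightarrow> nat) set" where
  "S_w P \<omega> w = {f. w_compatible w (f \<circ> the_inv_into P \<omega>)}"

end

theory Submission imports Defs "HOL-Library.Product_Lexorder" begin

definition ext_list :: "'a set \<Rightarrow> ('a \<Rightarrow> 'a \<Rightarrow> bool) \<Rightarrow> 'a list \<Rightarrow> bool" where
  "ext_list P le xs \<longleftrightarrow> distinct xs \<and> set xs = P \<and>
     (\<forall>i<length xs. \<forall>j<length xs. le (xs!i) (xs!j) \<longrightarrow> i \<le> j)"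

lemma linext_to_list:
  assumes "linear_extension P le g" "finite P"
  shows "ext_list P le (map (the_inv_into P g) [1..<card P + 1]) \<and>
         word_of P \<omega> g = map \<omega> (map (the_inv_into P g) [1..<card P + 1])"
proof -
  let ?xs = "map (the_inv_into P g) [1..<card P + 1]"
  have bij: "bij_betw g P {1..card P}" using assms unfolding linear_extension_def by blast
  have mono: "\<forall>x\<in>P. \<forall>y\<in>P. le x y \<longrightarrow> g x \<le> g y" using assms unfolding linear_extension_def by blast
  have len: "length ?xs = card P" by simp
  have nth: "?xs ! i = the_inv_into P g (i+1)" if "i < card P" for i using that by (simp del: upt_Suc add: nth_upt)
  have inP: "?xs ! i \<in> P" and gx: "g (?xs ! i) = i + 1" if "i < card P" for i
    using that nth[OF that] bij
    by (auto intro: the_inv_into_into[OF bij_betw_imp_inj_on] f_the_inv_into_f_bij_betw simp: bij_betw_def)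
  have dist: "distinct ?xs"
    unfolding distinct_conv_nth
  proof (intro allI impI)
    fix i j assume "i < length ?xs" "j < length ?xs" "i \<noteq> j"
    then show "?xs ! i \<noteq> ?xs ! j" using gx[of i] gx[of j] len by auto
  qed
  have "set ?xs = the_inv_into P g ` {1..<card P + 1}" by (simp del: upt_Suc)
  also have "\<dots> = P"
    using bij_betw_the_inv_into[OF bij] by (simp add: bij_betw_def atLeastLessThanSuc_atLeastAtMost)
  finally have st: "set ?xs = P" .
  have ord: "\<forall>i<length ?xs. \<forall>j<length ?xs. le (?xs!i) (?xs!j) \<longrightarrow> i \<le> j"
  proof (intro allI impI)
    fix i j assume "i < length ?xs" "j < length ?xs" "le (?xs!i) (?xs!j)"
    moreover have "?xs!i \<in> P" "?xs!j \<in> P" using inP \<open>i < length ?xs\<close> \<open>j < length ?xs\<close> len by auto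
    ultimately have "g (?xs!i) \<le> g (?xs!j)" using mono by blast
    then show "i \<le> j" using gx[of i] gx[of j] \<open>i < length ?xs\<close> \<open>j < length ?xs\<close> len by simp
  qed
  have "word_of P \<omega> g = map \<omega> ?xs" unfolding word_of_def by (simp only: map_map comp_def)
  then show ?thesis using dist st ord unfolding ext_list_def by blast
qed

lemma list_to_linext:
  assumes "ext_list P le xs"
  shows "\<exists>g. linear_extension P le g \<and> word_of P \<omega> g = map \<omega> xs"
proof -
  have dist: "distinct xs" and st: "set xs = P" and ord: "\<forall>i<length xs. \<forall>j<length xs. le (xs!i) (xs!j) \<longrightarrow> i \<le> j"
    using assms unfolding ext_list_def by auto
  have card: "card P = length xs" using dist st distinct_card by blast
  have bn: "bij_betw ((!) xs) {..<length xs} P" using bij_betw_nth[OF dist refl st[symmetric]] .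
  define h where "h = the_inv_into {..<length xs} ((!) xs)"
  define g where "g = (\<lambda>x. Suc (h x))"
  have bh: "bij_betw h P {..<length xs}" unfolding h_def by (rule bij_betw_the_inv_into[OF bn])
  have hx: "h (xs ! i) = i" if "i < length xs" for i
    unfolding h_def using that bn by (simp add: bij_betw_def the_inv_into_f_f)
  have bs: "bij_betw Suc {..<length xs} {1..length xs}"
    by (simp add: bij_betw_def image_Suc_lessThan)
  have bg: "bij_betw g P {1..card P}" unfolding g_def card
    using bij_betw_trans[OF bh bs] by (simp add: comp_def)
  have mono: "\<forall>x\<in>P. \<forall>y\<in>P. le x y \<longrightarrow> g x \<le> g y"
  proof (intro ballI impI)
    fix x y assume "x \<in> P" "y \<in> P" "le x y"
    then obtain i j where "i < length xs" "j < length xs" "x = xs!i" "y = xs!j" using st by (metis in_set_conv_nth)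
    then show "g x \<le> g y" using ord hx \<open>le x y\<close> unfolding g_def by auto
  qed
  have inv: "the_inv_into P g (Suc i) = xs ! i" if "i < length xs" for i
  proof -
    have "g (xs ! i) = Suc i" using hx that unfolding g_def by simp
    moreover have "xs ! i \<in> P" using that st by auto
    ultimately show ?thesis using bg by (metis bij_betw_def the_inv_into_f_f)
  qed
  have "word_of P \<omega> g = map \<omega> xs"
    unfolding word_of_def card
    by (rule nth_equalityI) (auto simp del: upt_Suc simp add: inv nth_upt)
  then show ?thesis using bg mono unfolding linear_extension_def by blast
qed

lemma lin_words_char:
  assumes "finite P"
  shows "w \<in> lin_words P le \<omega> \<longleftrightarrow> (\<exists>xs. ext_list P le xs \<and> w = map \<omega> xs)"
proof
  assume "w \<in> lin_words P le \<omega>"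
  then obtain g where g: "linear_extension P le g" "w = word_of P \<omega> g" unfolding lin_words_def by blast
  show "\<exists>xs. ext_list P le xs \<and> w = map \<omega> xs" using linext_to_list[OF g(1) assms, of \<omega>] g(2) by blast
next
  assume "\<exists>xs. ext_list P le xs \<and> w = map \<omega> xs"
  then obtain xs where "ext_list P le xs" "w = map \<omega> xs" by blast
  then show "w \<in> lin_words P le \<omega>" using list_to_linext[of P le xs \<omega>] unfolding lin_words_def by (metis (mono_tags, lifting) mem_Collect_eq)
qed

definition key :: "('a \<Rightarrow> nat) \<Rightarrow> ('a \<Rightarrow> nat) \<Rightarrow> 'a \<Rightarrow> int \<times> nat" where
  "key f \<omega> x = (- int (f x), \<omega> x)"

lemma key_less: "key f \<omega> x < key f \<omega> y \<longleftrightarrow> f x > f y \<or> (f x = f y \<and> \<omega> x < \<omega> y)"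
  unfolding key_def by (auto simp: less_prod_def')

lemma Sw_char:
  assumes inj: "inj_on \<omega> P" and dist: "distinct xs" and st: "set xs = P"
  shows "f \<in> S_w P \<omega> (map \<omega> xs) \<longleftrightarrow> sorted_wrt (\<lambda>x y. key f \<omega> x < key f \<omega> y) xs"
proof -
  have tr: "transp (\<lambda>x y. key f \<omega> x < key f \<omega> y)" by (rule transpI) (rule less_trans)
  have inx: "xs ! i \<in> P" if "i < length xs" for i using that st by auto
  have fv: "(f \<circ> the_inv_into P \<omega>) (\<omega> (xs ! i)) = f (xs ! i)" if "i < length xs" for i
    using inx[OF that] inj by (simp add: the_inv_into_f_f)
  have ne: "\<omega> (xs ! i) \<noteq> \<omega> (xs ! Suc i)" if "Suc i < length xs" for i
  proof
    assume "\<omega> (xs ! i) = \<omega> (xs ! Suc i)"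
    then have "xs ! i = xs ! Suc i" using inj inx[of i] inx[of "Suc i"] that by (auto dest: inj_onD)
    then show False using dist that by (simp add: nth_eq_iff_index_eq)
  qed
  have "f \<in> S_w P \<omega> (map \<omega> xs) \<longleftrightarrow> (\<forall>i. Suc i < length xs \<longrightarrow>
      f (xs ! i) \<ge> f (xs ! Suc i) \<and> (\<omega> (xs ! i) > \<omega> (xs ! Suc i) \<longrightarrow> f (xs ! i) > f (xs ! Suc i)))"
    unfolding S_w_def w_compatible_def using fv by (auto simp del: comp_apply)
  also have "\<dots> \<longleftrightarrow> (\<forall>i. Suc i < length xs \<longrightarrow> key f \<omega> (xs!i) < key f \<omega> (xs ! Suc i))"
    unfolding key_less by (intro iff_allI imp_cong[OF refl]) (drule ne, auto)
  also have "\<dots> \<longleftrightarrow> sorted_wrt (\<lambda>x y. key f \<omega> x < key f \<omega> y) xs"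
    using sorted_wrt_iff_nth_Suc_transp[OF tr] by simp
  finally show ?thesis .
qed

lemma sorted_unique:
  assumes inj: "inj_on \<omega> P" and "set xs = P" "set ys = P"
    and "sorted_wrt (\<lambda>x y. key f \<omega> x < key f \<omega> y) xs"
    and "sorted_wrt (\<lambda>x y. key f \<omega> x < key f \<omega> y) ys"
  shows "xs = ys"
proof -
  have ik: "inj_on (key f \<omega>) P" using inj unfolding key_def inj_on_def by auto
  have "map (key f \<omega>) ys = map (key f \<omega>) xs"
    by (rule strict_sorted_equal) (use assms in \<open>simp_all add: sorted_wrt_map\<close>)
  then show ?thesis using map_inj_on[of "key f \<omega>" xs ys] ik assms by simp
qed

lemma sorted_exists:
  assumes inj: "inj_on \<omega> P" and fin: "finite P"
  obtains xs where "distinct xs" "set xs = P" "sorted_wrt (\<lambda>x y. key f \<omega> x < key f \<omega> y) xs"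
proof -
  have ik: "inj_on (key f \<omega>) P" using inj unfolding key_def inj_on_def by auto
  interpret folding_insort_key "(\<le>)" "(<)" P "key f \<omega>" by unfold_locales (rule ik)
  obtain l where l: "sorted_wrt (<) (map (key f \<omega>) l)" "set l = P" "length l = card P"
    using finite_set_strict_sorted[OF order_refl fin] by blast
  have "distinct l" using l fin by (simp add: card_distinct)
  then show ?thesis using that l by (simp add: sorted_wrt_map)
qed


theorem lemma3p2:
  fixes P :: "'a set" and le :: "'a \<Rightarrow> 'a \<Rightarrow> bool" and \<omega> :: "'a \<Rightarrow> nat" and s :: 'a
  assumes "finite P" and "poset_on P le" and "labeling P \<omega>" and "s \<in> P"
  shows "A_set P le \<omega> s = (\<Union>w\<in>lin_words_s P le \<omega> s. S_w P \<omega> w)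
     \<and> (\<forall>w\<in>lin_words_s P le \<omega> s. \<forall>v\<in>lin_words_s P le \<omega> s. w \<noteq> v \<longrightarrow> S_w P \<omega> w \<inter> S_w P \<omega> v = {})"
proof -
  note fin = assms(1) and sP = assms(4)
  have inj: "inj_on \<omega> P" using assms(3) unfolding labeling_def bij_betw_def by blast
  have Ls: "w \<in> lin_words_s P le \<omega> s \<longleftrightarrow> (\<exists>xs. ext_list P le xs \<and> w = map \<omega> xs \<and> xs \<noteq> [] \<and> last xs = s)" for w
  proof
    assume "w \<in> lin_words_s P le \<omega> s"
    then obtain xs where xs: "ext_list P le xs" "w = map \<omega> xs" "w \<noteq> []" "last w = \<omega> s"
      unfolding lin_words_s_def using lin_words_char[OF fin] by blast
    then have ne: "xs \<noteq> []" by auto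
    have "last xs \<in> P" using xs(1) ne unfolding ext_list_def by auto
    moreover have "\<omega> (last xs) = \<omega> s" using xs ne by (simp add: last_map)
    ultimately have "last xs = s" using inj sP by (auto dest: inj_onD)
    then show "\<exists>xs. ext_list P le xs \<and> w = map \<omega> xs \<and> xs \<noteq> [] \<and> last xs = s" using xs ne by blast
  next
    assume "\<exists>xs. ext_list P le xs \<and> w = map \<omega> xs \<and> xs \<noteq> [] \<and> last xs = s"
    then obtain xs where xs: "ext_list P le xs" "w = map \<omega> xs" "xs \<noteq> []" "last xs = s" by blast
    then show "w \<in> lin_words_s P le \<omega> s"
      unfolding lin_words_s_def using lin_words_char[OF fin] by (auto simp: last_map)
  qed
  let ?R = "\<lambda>f x y. key f \<omega> x < key f \<omega> y"
  have part1: "A_set P le \<omega> s = (\<Union>w\<in>lin_words_s P le \<omega> s. S_w P \<omega> w)"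
  proof (intro equalityI subsetI)
    fix f assume "f \<in> A_set P le \<omega> s"
    then have PP: "P_partition P le \<omega> f" and m1: "\<forall>t\<in>P. f s \<le> f t"
      and m2: "\<forall>t\<in>P. t \<noteq> s \<and> f s = f t \<longrightarrow> \<omega> s > \<omega> t"
      unfolding A_set_def Ps_partition_def by auto
    obtain xs where xs: "distinct xs" "set xs = P" "sorted_wrt (?R f) xs"
      using sorted_exists[OF inj fin] by blast
    have ne: "xs \<noteq> []" using xs sP by auto
    have ord: "\<forall>i<length xs. \<forall>j<length xs. le (xs!i) (xs!j) \<longrightarrow> i \<le> j"
    proof (intro allI impI)
      fix i j assume ij: "i < length xs" "j < length xs" "le (xs!i) (xs!j)"
      show "i \<le> j"
      proof (rule ccontr)
        assume "\<not> i \<le> j"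
        then have "?R f (xs!j) (xs!i)" using sorted_wrt_nth_less[OF xs(3)] ij by simp
        moreover have "f (xs!i) \<ge> f (xs!j) \<and> (\<omega> (xs!i) > \<omega> (xs!j) \<longrightarrow> f (xs!i) > f (xs!j))"
          using PP ij xs(2) unfolding P_partition_def by (meson nth_mem)
        ultimately show False unfolding key_less by auto
      qed
    qed
    have el: "ext_list P le xs" unfolding ext_list_def using xs ord by blast
    have ls: "last xs = s"
    proof (rule ccontr)
      assume nl: "last xs \<noteq> s"
      have lP: "last xs \<in> P" using ne xs(2) by auto
      have "s \<in> set xs" using sP xs(2) by simp
      then obtain k where k: "k < length xs" "xs ! k = s" by (auto simp: in_set_conv_nth)
      have "xs ! (length xs - 1) = last xs" using ne by (simp add: last_conv_nth)
      then have "k \<noteq> length xs - 1" using nl k by auto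
      then have "?R f s (last xs)" using sorted_wrt_nth_less[OF xs(3), of k "length xs - 1"] k ne
        by (simp add: last_conv_nth)
      moreover have "f s \<le> f (last xs)" using m1 lP by blast
      moreover have "f s = f (last xs) \<longrightarrow> \<omega> s > \<omega> (last xs)" using m2 lP nl by auto
      ultimately show False unfolding key_less by auto
    qed
    have "map \<omega> xs \<in> lin_words_s P le \<omega> s" using Ls[of "map \<omega> xs"] el ne ls by blast
    moreover have "f \<in> S_w P \<omega> (map \<omega> xs)" by (rule Sw_char[OF inj xs(1,2), THEN iffD2, OF xs(3)])
    ultimately show "f \<in> (\<Union>w\<in>lin_words_s P le \<omega> s. S_w P \<omega> w)" by blast
  next
    fix f assume "f \<in> (\<Union>w\<in>lin_words_s P le \<omega> s. S_w P \<omega> w)"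
    then obtain w where w: "w \<in> lin_words_s P le \<omega> s" and fw: "f \<in> S_w P \<omega> w" by blast
    obtain xs where el: "ext_list P le xs" and wx: "w = map \<omega> xs" and ne: "xs \<noteq> []" and ls: "last xs = s"
      using w unfolding Ls[of w] by blast
    have fS: "f \<in> S_w P \<omega> (map \<omega> xs)" using fw wx by simp
    have dist: "distinct xs" and st: "set xs = P" and ord: "\<forall>i<length xs. \<forall>j<length xs. le (xs!i) (xs!j) \<longrightarrow> i \<le> j"
      using el unfolding ext_list_def by auto
    have sw: "sorted_wrt (?R f) xs" by (rule Sw_char[OF inj dist st, THEN iffD1, OF fS])
    have sl: "?R f t s" if "t \<in> P" "t \<noteq> s" for t
    proof -
      have "t \<in> set xs" using that st by simp
      then obtain k where k: "k < length xs" "xs ! k = t" by (auto simp: in_set_conv_nth)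
      have "xs ! (length xs - 1) = s" using ne ls by (simp add: last_conv_nth)
      then have "k \<noteq> length xs - 1" using that k by auto
      then show ?thesis using sorted_wrt_nth_less[OF sw, of k "length xs - 1"] k ne ls
        by (simp add: last_conv_nth)
    qed
    have PP: "P_partition P le \<omega> f" unfolding P_partition_def
    proof (intro ballI impI)
      fix x y assume xy: "x \<in> P" "y \<in> P" "le x y"
      have "x \<in> set xs" using xy st by simp
      then obtain i where i: "i < length xs" "xs ! i = x" by (auto simp: in_set_conv_nth)
      have "y \<in> set xs" using xy st by simp
      then obtain j where j: "j < length xs" "xs ! j = y" by (auto simp: in_set_conv_nth)
      have "i \<le> j" using ord i j xy by blast
      show "f y \<le> f x \<and> (\<omega> y < \<omega> x \<longrightarrow> f y < f x)"
      proof (cases "i = j")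
        case True then show ?thesis using i j by auto
      next
        case False
        then have "?R f x y" using sorted_wrt_nth_less[OF sw, of i j] i j \<open>i \<le> j\<close> by simp
        then show ?thesis unfolding key_less by auto
      qed
    qed
    have T: "\<forall>t\<in>P. f s \<le> f t \<and> (t \<noteq> s \<and> f s = f t \<longrightarrow> \<omega> s > \<omega> t)"
    proof
      fix t assume tP: "t \<in> P"
      show "f s \<le> f t \<and> (t \<noteq> s \<and> f s = f t \<longrightarrow> \<omega> s > \<omega> t)"
      proof (cases "t = s")
        case True then show ?thesis by simp
      next
        case False then have "?R f t s" using sl tP by blast
        then show ?thesis unfolding key_less by auto
      qed
    qed
    have "Ps_partition P le \<omega> s f" unfolding Ps_partition_def
      using PP T by blast
    then show "f \<in> A_set P le \<omega> s" unfolding A_set_def by blast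
  qed
  have part2: "\<forall>w\<in>lin_words_s P le \<omega> s. \<forall>v\<in>lin_words_s P le \<omega> s. w \<noteq> v \<longrightarrow> S_w P \<omega> w \<inter> S_w P \<omega> v = {}"
  proof (intro ballI impI)
    fix w v assume w: "w \<in> lin_words_s P le \<omega> s" and v: "v \<in> lin_words_s P le \<omega> s" and wv: "w \<noteq> v"
    obtain xs where xs: "ext_list P le xs" "w = map \<omega> xs" using w unfolding Ls[of w] by blast
    obtain ys where ys: "ext_list P le ys" "v = map \<omega> ys" using v unfolding Ls[of v] by blast
    show "S_w P \<omega> w \<inter> S_w P \<omega> v = {}"
    proof (rule ccontr)
      assume "S_w P \<omega> w \<inter> S_w P \<omega> v \<noteq> {}"
      then obtain f where f1: "f \<in> S_w P \<omega> w" and f2: "f \<in> S_w P \<omega> v" by blast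
      have dx: "distinct xs" "set xs = P" using xs(1) unfolding ext_list_def by auto
      have dy: "distinct ys" "set ys = P" using ys(1) unfolding ext_list_def by auto
      have s1: "sorted_wrt (?R f) xs" using Sw_char[OF inj dx, THEN iffD1] f1 xs(2) by simp
      have s2: "sorted_wrt (?R f) ys" using Sw_char[OF inj dy, THEN iffD1] f2 ys(2) by simp
      have "xs = ys" by (rule sorted_unique[OF inj dx(2) dy(2) s1 s2])
      then show False using wv xs(2) ys(2) by simp
    qed
  qed
  show ?thesis using part1 part2 by blast
qed

end
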